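(* Let $K$ be a number field, let $\alpha,\beta$ be multiplicatively independent positive rational numbers, and let $F\in K[[x^{\mathbb{R}}]]$ be a Hahn series satisfying nontrivial homogeneous equations $\sum_{i=0}^{d_1}P_i(x)F(x^{\alpha^i})=0$ and $\sum_{i=0}^{d_2}Q_i(x)F(x^{\beta^i})=0$ with $P_i,Q_i\in K[x]$, $P_{d_1}\ne0$, $Q_{d_2}\ne0$. Fix an integer $N>0$. Then there is a positive integer $l$ such that for all integers $m,n$ with $|m|<N$ and $|n|<N$, the Hahn series $F(x^l)$ is $\alpha^n\beta^m$-Mahler, i.e. there exist $e\ge0$ and $R_0,\dots,R_e\in K[x]$ not all zero with $\sum_{j=0}^e R_j(x)F\big(x^{l(\alpha^n\beta^m)^j}\big)=0$.
   Context: $K[[x^{\mathbb{R}}]]$ is the field of Hahn series $\sum_{i\in\mathbb{R}} f_ix^i$ ($f_i\in K$) with well-ordered support; $F(x^\gamma)=\sum_if_ix^{\gamma i}$ for $\gamma>0$. Positive reals $\alpha,\beta$ are multiplicatively independent if $\log\alpha/\log\beta\notin\mathbb{Q}$. *)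

theory Defs
  imports "HOL-Analysis.Analysis" "HOL-Computational_Algebra.Polynomial"
begin

definition number_field :: "complex set \<Rightarrow> bool" where
  "number_field K \<longleftrightarrow>
     0 \<in> K \<and> 1 \<in> K \<and>
     (\<forall>a\<in>K. \<forall>b\<in>K. a + b \<in> K \<and> a * b \<in> K \<and> - a \<in> K) \<and>
     (\<forall>a\<in>K. a \<noteq> 0 \<longrightarrow> inverse a \<in> K) \<and>
     (\<exists>B. finite B \<and> B \<subseteq> K \<and>
        (\<forall>z\<in>K. \<exists>c :: complex \<Rightarrow> rat. z = (\<Sum>b\<in>B. of_rat (c b) * b)))"

text \<open>Hahn series with coefficients in K: f i is the coefficient of x^i; support well-ordered.\<close>
definition hahn_series :: "complex set \<Rightarrow> (real \<Rightarrow> complex) \<Rightarrow> bool" where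
  "hahn_series K f \<longleftrightarrow> (\<forall>i. f i \<in> K) \<and>
     (\<forall>S. S \<subseteq> {i. f i \<noteq> 0} \<and> S \<noteq> {} \<longrightarrow> (\<exists>m\<in>S. \<forall>s\<in>S. m \<le> s))"

text \<open>F(x^gamma) = sum_i f_i x^(gamma i): coefficient of x^j is f (j / gamma).\<close>
definition hsubst :: "real \<Rightarrow> (real \<Rightarrow> complex) \<Rightarrow> (real \<Rightarrow> complex)" where
  "hsubst \<gamma> f = (\<lambda>j. f (j / \<gamma>))"

definition pmul :: "complex poly \<Rightarrow> (real \<Rightarrow> complex) \<Rightarrow> (real \<Rightarrow> complex)" where
  "pmul p f = (\<lambda>i. \<Sum>k\<le>degree p. coeff p k * f (i - real k))"

definition poly_over :: "complex set \<Rightarrow> complex poly \<Rightarrow> bool" where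
  "poly_over K p \<longleftrightarrow> (\<forall>k. coeff p k \<in> K)"

definition mahler :: "complex set \<Rightarrow> real \<Rightarrow> (real \<Rightarrow> complex) \<Rightarrow> bool" where
  "mahler K \<gamma> G \<longleftrightarrow> (\<exists>(e::nat) R. (\<forall>j\<le>e. poly_over K (R j)) \<and> (\<exists>j\<le>e. R j \<noteq> 0) \<and>
      (\<lambda>i. \<Sum>j\<le>e. pmul (R j) (hsubst (\<gamma> ^ j) G) i) = (\<lambda>_. 0))"

definition mult_indep :: "real \<Rightarrow> real \<Rightarrow> bool" where
  "mult_indep a b \<longleftrightarrow> ln a / ln b \<notin> \<rat>"

end

theory Submission
  imports Defs
begin


definition act :: "real \<Rightarrow> complex poly \<Rightarrow> (real \<Rightarrow> complex) \<Rightarrow> real \<Rightarrow> complex" where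
  "act h p f = (\<lambda>t. \<Sum>k\<le>degree p. coeff p k * f (t - real k * h))"

lemma act_upto: assumes "degree p \<le> n"
  shows "act h p f t = (\<Sum>k\<le>n. coeff p k * f (t - real k * h))"
  unfolding act_def
  by (rule sum.mono_neutral_left) (auto simp: coeff_eq_0 assms)

lemma act_add: "act h (p + q) f t = act h p f t + act h q f t"
proof -
  let ?n = "max (degree p) (degree q)"
  have "degree (p+q) \<le> ?n" by (rule degree_add_le) auto
  then have "act h (p + q) f t = (\<Sum>k\<le>?n. coeff (p+q) k * f (t - real k * h))" by (rule act_upto)
  moreover have "act h p f t = (\<Sum>k\<le>?n. coeff p k * f (t - real k * h))" by (rule act_upto) auto
  moreover have "act h q f t = (\<Sum>k\<le>?n. coeff q k * f (t - real k * h))" by (rule act_upto) auto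
  ultimately show ?thesis by (simp add: sum.distrib distrib_right)
qed

lemma act_smult: "act h (smult c p) f t = c * act h p f t"
proof -
  have "act h (smult c p) f t = (\<Sum>k\<le>degree p. coeff (smult c p) k * f (t - real k * h))"
    by (rule act_upto) (rule degree_smult_le)
  then show ?thesis by (simp add: act_def sum_distrib_left mult.assoc)
qed

lemma act_zero: "act h 0 f t = 0" by (simp add: act_def)

lemma act_uminus: "act h (- p) f t = - act h p f t"
  by (simp add: act_def sum_negf)

lemma act_const: "act h [:c:] f t = c * f t" by (simp add: act_def)

lemma act_one: "act h 1 f t = f t" by (simp add: act_def)

lemma act_pCons: "act h (pCons a p) f t = a * f t + act h p f (t - h)"
proof -
  have "act h (pCons a p) f t = (\<Sum>k\<le>Suc (degree p). coeff (pCons a p) k * f (t - real k * h))"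
    by (rule act_upto) (rule degree_pCons_le)
  also have "\<dots> = coeff (pCons a p) 0 * f (t - real 0 * h) + (\<Sum>k\<le>degree p. coeff (pCons a p) (Suc k) * f (t - real (Suc k) * h))"
    by (rule sum.atMost_Suc_shift)
  also have "\<dots> = a * f t + (\<Sum>k\<le>degree p. coeff p k * f ((t - h) - real k * h))"
    by (simp add: algebra_simps)
  finally show ?thesis by (simp add: act_def)
qed

lemma act_mult: "act h (p * q) f = act h p (act h q f)"
proof (induction p rule: pCons_induct)
  case 0
  then show ?case by (simp add: act_def)
next
  case (pCons a p)
  show ?case
    by (rule ext) (simp add: act_add act_smult act_pCons pCons.IH)
qed

lemma act_monom: "act h (monom 1 s) f t = f (t - real s * h)"
proof -
  have "act h (monom 1 s) f t = (\<Sum>k\<le>s. coeff (monom 1 s) k * f (t - real k * h))"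
    by (rule act_upto) (rule degree_monom_le)
  also have "\<dots> = (\<Sum>k\<le>s. if k = s then f (t - real k * h) else 0)"
    by (rule sum.cong) auto
  finally show ?thesis by simp
qed

lemma act_compose: "act (real s * h) p f t = act h (pcompose p (monom 1 s)) f t"
proof (induction p arbitrary: t rule: pCons_induct)
  case 0
  then show ?case by (simp add: act_def)
next
  case (pCons a p)
  show ?case
    by (simp add: pcompose_pCons act_pCons act_add act_const act_mult act_monom pCons.IH act_zero)
qed

lemma act_sum_f: "act h p (\<lambda>t. \<Sum>i\<in>I. g i t) t = (\<Sum>i\<in>I. act h p (g i) t)"
  unfolding act_def by (simp add: sum_distrib_left) (rule sum.swap)

lemma act_sum_p: "act h (\<Sum>i\<in>I. p i) f t = (\<Sum>i\<in>I. act h (p i) f t)"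
  by (induction I rule: infinite_finite_induct) (simp_all add: act_zero act_add)



definition ring_set :: "complex set \<Rightarrow> bool" where
  "ring_set K \<longleftrightarrow> 0 \<in> K \<and> 1 \<in> K \<and> (\<forall>a\<in>K. \<forall>b\<in>K. a + b \<in> K \<and> a * b \<in> K \<and> - a \<in> K)"

lemma nf_ring: "number_field K \<Longrightarrow> ring_set K"
  unfolding number_field_def ring_set_def by blast

lemma rs_sum: assumes "ring_set K" "\<forall>i\<in>I. f i \<in> K" shows "sum f I \<in> K"
  using assms(2)
proof (induction I rule: infinite_finite_induct)
  case (insert x F)
  then show ?case using assms(1) unfolding ring_set_def by auto
qed (use assms(1) in \<open>auto simp: ring_set_def\<close>)

lemma po_0: "ring_set K \<Longrightarrow> poly_over K 0"
  by (simp add: poly_over_def ring_set_def)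
lemma po_1: "ring_set K \<Longrightarrow> poly_over K 1"
  by (simp add: poly_over_def ring_set_def coeff_1)
lemma po_const: "ring_set K \<Longrightarrow> c \<in> K \<Longrightarrow> poly_over K [:c:]"
  by (simp add: poly_over_def ring_set_def coeff_pCons split: nat.split)
lemma po_monom: "ring_set K \<Longrightarrow> poly_over K (monom 1 s)"
  by (simp add: poly_over_def ring_set_def)
lemma po_add: "ring_set K \<Longrightarrow> poly_over K p \<Longrightarrow> poly_over K q \<Longrightarrow> poly_over K (p + q)"
  by (simp add: poly_over_def ring_set_def)
lemma po_uminus: "ring_set K \<Longrightarrow> poly_over K p \<Longrightarrow> poly_over K (- p)"
  by (auto simp: poly_over_def ring_set_def)
lemma po_mult: "ring_set K \<Longrightarrow> poly_over K p \<Longrightarrow> poly_over K q \<Longrightarrow> poly_over K (p * q)"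
  unfolding poly_over_def coeff_mult
  by (intro allI rs_sum) (auto simp: ring_set_def)
lemma po_sum: assumes "ring_set K" "\<forall>i\<in>I. poly_over K (p i)" shows "poly_over K (\<Sum>i\<in>I. p i)"
  using assms(2)
  by (induction I rule: infinite_finite_induct) (auto simp: po_0 po_add assms(1))
lemma po_pCons: "poly_over K (pCons a p) \<Longrightarrow> a \<in> K \<and> poly_over K p"
  unfolding poly_over_def by (metis coeff_pCons_0 coeff_pCons_Suc)
lemma po_compose: assumes "ring_set K" "poly_over K p"
  shows "poly_over K (pcompose p (monom 1 s))"
  using assms(2)
proof (induction p rule: pCons_induct)
  case 0
  then show ?case by (simp add: po_0 assms(1))
next
  case (pCons a p)
  then show ?case
    by (auto simp: pcompose_pCons dest!: po_pCons intro!: po_add po_const po_mult po_monom assms(1))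
qed

lemma compose_nz: assumes "p \<noteq> 0" "s > 0" shows "pcompose p (monom (1::complex) s) \<noteq> 0"
  using pcompose_eq_0[of p "monom 1 s"] assms by (auto simp: degree_monom_eq)

lemma kernel:
  fixes v :: "'i \<Rightarrow> 'j \<Rightarrow> 'a::idom"
  assumes S: "(0::'a)\<in>S" "1\<in>S" "\<forall>a\<in>S. \<forall>b\<in>S. a+b\<in>S \<and> a*b\<in>S \<and> -a\<in>S"
  and "finite J" "finite I" "card J < card I" "\<forall>i\<in>I. \<forall>j\<in>J. v i j \<in> S"
  shows "\<exists>s. (\<forall>i\<in>I. s i \<in> S) \<and> (\<exists>i\<in>I. s i \<noteq> 0) \<and> (\<forall>j\<in>J. (\<Sum>i\<in>I. s i * v i j) = 0)"
  using assms(4-)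
proof (induction J arbitrary: I v rule: finite_induct)
  case empty
  then have "I \<noteq> {}" by auto
  then show ?case using S by (intro exI[of _ "\<lambda>_. 1"]) auto
next
  case (insert j0 J)
  have Ssum: "\<And>f A. \<forall>x\<in>A. f x \<in> S \<Longrightarrow> sum f A \<in> S"
  proof -
    fix f and A :: "'b set"
    show "\<forall>x\<in>A. f x \<in> S \<Longrightarrow> sum f A \<in> S"
      by (induction A rule: infinite_finite_induct) (use S in auto)
  qed
  show ?case
  proof (cases "\<forall>i\<in>I. v i j0 = 0")
    case True
    have "card J < card I" using insert by auto
    with insert.IH[of I v] insert.prems obtain s where
      "(\<forall>i\<in>I. s i \<in> S)" "(\<exists>i\<in>I. s i \<noteq> 0)" "(\<forall>j\<in>J. (\<Sum>i\<in>I. s i * v i j) = 0)" by auto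
    then show ?thesis using True by (intro exI[of _ s]) auto
  next
    case False
    then obtain p where p: "p \<in> I" "v p j0 \<noteq> 0" by auto
    define c where "c = v p j0"
    define I' where "I' = I - {p}"
    define v' where "v' i j = c * v i j - v i j0 * v p j" for i j
    have cS: "c \<in> S" using insert.prems p unfolding c_def by auto
    have fin: "finite I'" using insert.prems unfolding I'_def by auto
    have card: "card J < card I'" using insert p unfolding I'_def by auto
    have v'S: "\<forall>i\<in>I'. \<forall>j\<in>J. v' i j \<in> S"
    proof (intro ballI)
      fix i j assume "i \<in> I'" "j \<in> J"
      then have a: "v i j \<in> S" "v i j0 \<in> S" "v p j \<in> S" using insert.prems p unfolding I'_def by auto
      have "c * v i j \<in> S" "v i j0 * v p j \<in> S" using a cS S by auto
      then have "c * v i j + - (v i j0 * v p j) \<in> S" using S(3) by blast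
      then show "v' i j \<in> S" unfolding v'_def by (simp only: diff_conv_add_uminus)
    qed
    obtain s' where s': "(\<forall>i\<in>I'. s' i \<in> S)" "(\<exists>i\<in>I'. s' i \<noteq> 0)"
      "(\<forall>j\<in>J. (\<Sum>i\<in>I'. s' i * v' i j) = 0)"
      using insert.IH[OF fin card v'S] by blast
    define z where "z = (\<Sum>i\<in>I'. s' i * v i j0)"
    define s where "s i = (if i = p then - z else s' i * c)" for i
    have zS: "z \<in> S" unfolding z_def using s' insert.prems S by (intro Ssum) (auto simp: I'_def)
    have sS: "\<forall>i\<in>I. s i \<in> S" using s' zS cS S unfolding s_def I'_def by auto
    have snz: "\<exists>i\<in>I. s i \<noteq> 0"
    proof -
      obtain i where "i \<in> I'" "s' i \<noteq> 0" using s' by auto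
      then show ?thesis using p unfolding s_def I'_def c_def by (intro bexI[of _ i]) auto
    qed
    have split: "(\<Sum>i\<in>I. s i * v i j) = - z * v p j + c * (\<Sum>i\<in>I'. s' i * v i j)" for j
    proof -
      have "(\<Sum>i\<in>I. s i * v i j) = s p * v p j + (\<Sum>i\<in>I'. s i * v i j)"
        unfolding I'_def using p insert.prems by (simp add: sum.remove)
      also have "(\<Sum>i\<in>I'. s i * v i j) = (\<Sum>i\<in>I'. c * (s' i * v i j))"
        by (rule sum.cong) (auto simp: s_def I'_def)
      finally show ?thesis by (simp add: s_def sum_distrib_left)
    qed
    have "\<forall>j\<in>insert j0 J. (\<Sum>i\<in>I. s i * v i j) = 0"
    proof
      fix j assume j: "j \<in> insert j0 J"
      show "(\<Sum>i\<in>I. s i * v i j) = 0"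
      proof (cases "j = j0")
        case True
        then show ?thesis by (simp add: split z_def c_def)
      next
        case False
        then have "j \<in> J" using j by auto
        then have "(\<Sum>i\<in>I'. s' i * v' i j) = 0" using s' by auto
        then have "(\<Sum>i\<in>I'. c * (s' i * v i j)) = (\<Sum>i\<in>I'. (s' i * v i j0) * v p j)"
          unfolding v'_def by (simp add: algebra_simps sum_subtractf)
        then have "c * (\<Sum>i\<in>I'. s' i * v i j) = z * v p j"
          by (simp add: sum_distrib_left sum_distrib_right z_def)
        then show ?thesis by (simp add: split)
      qed
    qed
    then show ?thesis using sS snz by blast
  qed
qed



definition rep' :: "complex set \<Rightarrow> real \<Rightarrow> (real \<Rightarrow> complex) set \<Rightarrow> (real \<Rightarrow> complex) \<Rightarrow> bool" where
  "rep' K h Bs g \<longleftrightarrow> (\<exists>c. (\<forall>f\<in>Bs. poly_over K (c f)) \<and> (\<forall>t. g t = (\<Sum>f\<in>Bs. act h (c f) f t)))"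

definition rep :: "complex set \<Rightarrow> real \<Rightarrow> (real \<Rightarrow> complex) set \<Rightarrow> (real \<Rightarrow> complex) \<Rightarrow> bool" where
  "rep K h Bs g \<longleftrightarrow> (\<exists>D. poly_over K D \<and> D \<noteq> 0 \<and> rep' K h Bs (act h D g))"

context
  fixes K :: "complex set" and h :: real and Bs :: "(real \<Rightarrow> complex) set"
  assumes RS: "ring_set K"
begin

lemma rep'_zero: "rep' K h Bs (\<lambda>t. 0)"
  unfolding rep'_def by (intro exI[of _ "\<lambda>_. 0"]) (simp add: po_0 RS act_zero)

lemma rep'_add: "rep' K h Bs g1 \<Longrightarrow> rep' K h Bs g2 \<Longrightarrow> rep' K h Bs (\<lambda>t. g1 t + g2 t)"
  unfolding rep'_def
proof (elim exE conjE)
  fix c1 c2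
  assume "\<forall>f\<in>Bs. poly_over K (c1 f)" "\<forall>t. g1 t = (\<Sum>f\<in>Bs. act h (c1 f) f t)"
    "\<forall>f\<in>Bs. poly_over K (c2 f)" "\<forall>t. g2 t = (\<Sum>f\<in>Bs. act h (c2 f) f t)"
  then show "\<exists>c. (\<forall>f\<in>Bs. poly_over K (c f)) \<and> (\<forall>t. g1 t + g2 t = (\<Sum>f\<in>Bs. act h (c f) f t))"
    by (intro exI[of _ "\<lambda>f. c1 f + c2 f"]) (simp add: po_add RS act_add sum.distrib)
qed

lemma rep'_sum: "\<forall>i\<in>I. rep' K h Bs (g i) \<Longrightarrow> rep' K h Bs (\<lambda>t. \<Sum>i\<in>I. g i t)"
proof (induction I rule: infinite_finite_induct)
  case (infinite A)
  then show ?case using rep'_zero by simp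
next
  case empty
  then show ?case using rep'_zero by simp
next
  case (insert x F)
  then show ?case using rep'_add[of "g x" "\<lambda>t. \<Sum>i\<in>F. g i t"] by simp
qed

lemma act_fun_cong: "(\<forall>t. g t = g' t) \<Longrightarrow> act h e g t = act h e g' t"
proof -
  assume "\<forall>t. g t = g' t"
  then have "g = g'" by auto
  then show ?thesis by simp
qed

lemma rep'_act: "poly_over K e \<Longrightarrow> rep' K h Bs g \<Longrightarrow> rep' K h Bs (act h e g)"
  unfolding rep'_def
proof (elim exE conjE)
  fix c assume e: "poly_over K e" and c: "\<forall>f\<in>Bs. poly_over K (c f)" "\<forall>t. g t = (\<Sum>f\<in>Bs. act h (c f) f t)"
  have "act h e g t = (\<Sum>f\<in>Bs. act h (e * c f) f t)" for t
  proof -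
    have "act h e g t = act h e (\<lambda>t. \<Sum>f\<in>Bs. act h (c f) f t) t"
      by (rule act_fun_cong) (use c in auto)
    also have "\<dots> = (\<Sum>f\<in>Bs. act h (e * c f) f t)"
      by (simp add: act_sum_f act_mult)
    finally show ?thesis .
  qed
  then show "\<exists>c. (\<forall>f\<in>Bs. poly_over K (c f)) \<and> (\<forall>t. act h e g t = (\<Sum>f\<in>Bs. act h (c f) f t))"
    using c e by (intro exI[of _ "\<lambda>f. e * c f"]) (simp add: po_mult RS)
qed

lemma rep_basis: assumes "finite Bs" "f \<in> Bs" shows "rep K h Bs f"
proof -
  have "\<forall>t. act h 1 f t = (\<Sum>f'\<in>Bs. act h (if f' = f then 1 else 0) f' t)"
  proof
    fix t
    have "(\<Sum>f'\<in>Bs. act h (if f' = f then 1 else 0) f' t) = (\<Sum>f'\<in>Bs. if f' = f then f' t else 0)"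
      by (rule sum.cong) (auto simp: act_one act_zero)
    also have "\<dots> = f t" using assms by (simp add: sum.delta')
    finally show "act h 1 f t = (\<Sum>f'\<in>Bs. act h (if f' = f then 1 else 0) f' t)" by (simp add: act_one)
  qed
  moreover have "\<forall>f'\<in>Bs. poly_over K (if f' = f then 1 else 0)" by (simp add: po_1 po_0 RS)
  ultimately show ?thesis unfolding rep_def rep'_def
    by (intro exI[of _ 1]) (auto simp: po_1 RS)
qed

lemma common_denom:
  assumes "finite I" "\<forall>i\<in>I. rep K h Bs (g i)"
  shows "\<exists>D. poly_over K D \<and> D \<noteq> 0 \<and> (\<forall>i\<in>I. rep' K h Bs (act h D (g i)))"
  using assms
proof (induction I rule: finite_induct)
  case empty
  then show ?case by (intro exI[of _ 1]) (simp add: po_1 RS)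
next
  case (insert x F)
  then obtain D where D: "poly_over K D" "D \<noteq> 0" "\<forall>i\<in>F. rep' K h Bs (act h D (g i))" by auto
  from insert.prems obtain Dx where Dx: "poly_over K Dx" "Dx \<noteq> 0" "rep' K h Bs (act h Dx (g x))"
    unfolding rep_def by auto
  have "\<forall>i\<in>insert x F. rep' K h Bs (act h (D * Dx) (g i))"
  proof
    fix i assume "i \<in> insert x F"
    then show "rep' K h Bs (act h (D * Dx) (g i))"
    proof
      assume "i = x"
      then show ?thesis using rep'_act[OF D(1) Dx(3)] by (simp add: act_mult)
    next
      assume "i \<in> F"
      then show ?thesis using rep'_act[OF Dx(1), of "act h D (g i)"] D
        by (simp add: act_mult[symmetric] mult.commute)
    qed
  qed
  then show ?case using D Dx by (intro exI[of _ "D * Dx"]) (simp add: po_mult RS)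
qed

lemma rep_closure:
  assumes "finite I" "poly_over K A" "A \<noteq> 0" "\<forall>i\<in>I. poly_over K (B i)" "\<forall>i\<in>I. rep K h Bs (g i)"
    and eq: "\<forall>t. act h A g0 t = (\<Sum>i\<in>I. act h (B i) (g i) t)"
  shows "rep K h Bs g0"
proof -
  obtain D where D: "poly_over K D" "D \<noteq> 0" "\<forall>i\<in>I. rep' K h Bs (act h D (g i))"
    using common_denom[OF assms(1,5)] by auto
  have "act h (D * A) g0 t = (\<Sum>i\<in>I. act h (B i) (act h D (g i)) t)" for t
  proof -
    have "act h (D * A) g0 t = act h D (\<lambda>t. \<Sum>i\<in>I. act h (B i) (g i) t) t"
      unfolding act_mult by (rule act_fun_cong) (use eq in auto)
    also have "\<dots> = (\<Sum>i\<in>I. act h (B i) (act h D (g i)) t)"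
      by (simp add: act_sum_f act_mult[symmetric] mult.commute)
    finally show ?thesis .
  qed
  moreover have "rep' K h Bs (\<lambda>t. \<Sum>i\<in>I. act h (B i) (act h D (g i)) t)"
    using D assms(4) by (intro rep'_sum) (auto intro: rep'_act)
  ultimately have "rep' K h Bs (act h (D * A) g0)"
  proof -
    assume a: "\<And>t. act h (D * A) g0 t = (\<Sum>i\<in>I. act h (B i) (act h D (g i)) t)"
    then have "act h (D * A) g0 = (\<lambda>t. \<Sum>i\<in>I. act h (B i) (act h D (g i)) t)" by auto
    moreover assume "rep' K h Bs (\<lambda>t. \<Sum>i\<in>I. act h (B i) (act h D (g i)) t)"
    ultimately show ?thesis by simp
  qed
  then show ?thesis unfolding rep_def using D assms(2,3) by (intro exI[of _ "D * A"]) (simp add: po_mult RS)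
qed

end



lemma one_dim:
  fixes K :: "complex set" and h :: real and Bs :: "(real \<Rightarrow> complex) set"
    and hh :: "int \<Rightarrow> real \<Rightarrow> complex" and L :: nat and T :: int
  assumes RS: "ring_set K"
  and rel: "\<forall>a. -T \<le> a \<and> a \<le> T \<longrightarrow> (\<exists>A. (\<forall>i\<le>L. poly_over K (A i)) \<and> A 0 \<noteq> 0 \<and> A L \<noteq> 0 \<and>
              (\<forall>t. (\<Sum>i\<le>L. act h (A i) (hh (a + int i)) t) = 0))"
  and base: "\<forall>a. 0 \<le> a \<and> a < int L \<longrightarrow> rep K h Bs (hh a)"
  shows "\<forall>a. -T \<le> a \<and> a \<le> T \<longrightarrow> rep K h Bs (hh a)"
proof -
  have up: "int a \<le> T + int L \<longrightarrow> rep K h Bs (hh (int a))" for a :: nat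
  proof (induction a rule: less_induct)
    case (less a)
    show ?case
    proof
      assume aT: "int a \<le> T + int L"
      show "rep K h Bs (hh (int a))"
      proof (cases "a < L")
        case True
        then show ?thesis using base by auto
      next
        case False
        define a0 where "a0 = int a - int L"
        obtain A where A: "\<forall>i\<le>L. poly_over K (A i)" "A 0 \<noteq> 0" "A L \<noteq> 0"
          "\<forall>t. (\<Sum>i\<le>L. act h (A i) (hh (a0 + int i)) t) = 0"
          using rel[rule_format, of a0] False aT unfolding a0_def by auto
        have eq: "\<forall>t. act h (A L) (hh (int a)) t = (\<Sum>i\<in>{..<L}. act h (- A i) (hh (a0 + int i)) t)"
        proof
          fix t
          have "(\<Sum>i\<le>L. act h (A i) (hh (a0 + int i)) t) =
                act h (A L) (hh (a0 + int L)) t + (\<Sum>i<L. act h (A i) (hh (a0 + int i)) t)"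
            by (simp add: lessThan_Suc_atMost[symmetric])
          then show "act h (A L) (hh (int a)) t = (\<Sum>i\<in>{..<L}. act h (- A i) (hh (a0 + int i)) t)"
            using A(4) unfolding a0_def by (simp add: act_uminus sum_negf eq_neg_iff_add_eq_0)
        qed
        have reps: "\<forall>i\<in>{..<L}. rep K h Bs (hh (a0 + int i))"
        proof
          fix i assume i: "i \<in> {..<L}"
          have "a0 + int i = int (a - L + i)" using False i unfolding a0_def by auto
          moreover have "a - L + i < a" using False i by auto
          moreover have "int (a - L + i) \<le> T + int L" using aT False i by auto
          ultimately show "rep K h Bs (hh (a0 + int i))" using less.IH[of "a - L + i"] by simp
        qed
        show ?thesis
          by (rule rep_closure[OF RS _ A(1)[rule_format] A(3) _ reps eq])
             (use A(1) in \<open>auto intro!: po_uminus RS\<close>)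
      qed
    qed
  qed
  have down: "int k \<le> T \<longrightarrow> rep K h Bs (hh (- int k))" for k :: nat
  proof (induction k rule: less_induct)
    case (less k)
    show ?case
    proof
      assume kT: "int k \<le> T"
      show "rep K h Bs (hh (- int k))"
      proof (cases "k = 0")
        case True
        then show ?thesis using up[of 0] kT by auto
      next
        case False
        define a0 where "a0 = - int k"
        obtain A where A: "\<forall>i\<le>L. poly_over K (A i)" "A 0 \<noteq> 0" "A L \<noteq> 0"
          "\<forall>t. (\<Sum>i\<le>L. act h (A i) (hh (a0 + int i)) t) = 0"
          using rel[rule_format, of a0] False kT unfolding a0_def by auto
        have eq: "\<forall>t. act h (A 0) (hh (- int k)) t = (\<Sum>i\<in>{..L} - {0}. act h (- A i) (hh (a0 + int i)) t)"
        proof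
          fix t
          have "(\<Sum>i\<le>L. act h (A i) (hh (a0 + int i)) t) =
                act h (A 0) (hh (a0 + int 0)) t + (\<Sum>i\<in>{..L} - {0}. act h (A i) (hh (a0 + int i)) t)"
            by (subst sum.remove[of _ 0]) auto
          then show "act h (A 0) (hh (- int k)) t = (\<Sum>i\<in>{..L} - {0}. act h (- A i) (hh (a0 + int i)) t)"
            using A(4) unfolding a0_def by (simp add: act_uminus sum_negf eq_neg_iff_add_eq_0)
        qed
        have reps: "\<forall>i\<in>{..L} - {0}. rep K h Bs (hh (a0 + int i))"
        proof
          fix i assume i: "i \<in> {..L} - {0}"
          show "rep K h Bs (hh (a0 + int i))"
          proof (cases "k \<le> i")
            case True
            then have "a0 + int i = int (i - k)" unfolding a0_def by auto
            moreover have "int (i - k) \<le> T + int L" using i kT by auto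
            ultimately show ?thesis using up by auto
          next
            case False
            then have "a0 + int i = - int (k - i)" unfolding a0_def by auto
            moreover have "k - i < k" "int (k - i) \<le> T" using i kT False by auto
            ultimately show ?thesis using less.IH by auto
          qed
        qed
        show ?thesis
          by (rule rep_closure[OF RS _ A(1)[rule_format] A(2) _ reps eq])
             (use A(1) in \<open>auto intro!: po_uminus RS\<close>)
      qed
    qed
  qed
  show ?thesis
  proof (intro allI impI)
    fix a assume a: "-T \<le> a \<and> a \<le> T"
    show "rep K h Bs (hh a)"
    proof (cases "a \<ge> 0")
      case True
      then show ?thesis using up[of "nat a"] a by auto
    next
      case False
      then show ?thesis using down[of "nat (-a)"] a by auto
    qed
  qed
qed



lemma pos_rat: assumes "(x::real) \<in> \<rat>" "x > 0" shows "\<exists>p q::nat. p > 0 \<and> q > 0 \<and> x = real p / real q"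
proof -
  obtain a b where ab: "x = of_int a / of_int b" "b > 0" using Rats_cases'[OF assms(1)] by metis
  then have "a > 0" using assms(2) by (simp add: zero_less_divide_iff)
  then show ?thesis using ab by (intro exI[of _ "nat a"] exI[of _ "nat b"]) auto
qed

lemma single_box:
  fixes p q M :: nat and a :: int
  assumes "p > 0" "q > 0" "\<bar>a\<bar> \<le> int M"
  shows "\<exists>s::nat. s > 0 \<and> real s = real ((p*q)^M) * (real p / real q) powr real_of_int a"
proof (cases "a \<ge> 0")
  case True
  then obtain n where n: "a = int n" by (metis nonneg_eq_int)
  then obtain k where k: "M = n + k" using assms(3) by (metis abs_of_nat le_Suc_ex of_nat_le_iff)
  have "(real p / real q) powr real_of_int a = (real p / real q) ^ n"
    using assms n by (simp add: powr_realpow)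
  then show ?thesis using assms
    by (intro exI[of _ "p^(n+n+k) * q^k"]) (simp add: k power_add power_mult_distrib field_simps)
next
  case False
  then obtain n where n: "a = - int n" by (metis neg_0_le_iff_le nonneg_eq_int verit_minus_simplify(4) linorder_linear)
  then obtain k where k: "M = n + k" using assms(3) by (metis abs_minus_cancel abs_of_nat le_Suc_ex of_nat_le_iff)
  have "(real p / real q) powr real_of_int a = (real q / real p) ^ n"
    using assms n by (simp add: powr_minus powr_realpow power_divide)
  then show ?thesis using assms
    by (intro exI[of _ "p^k * q^(n+n+k)"]) (simp add: k power_add power_mult_distrib field_simps)
qed

lemma pmul_act:
  assumes "c > 0" "D > 0"
  shows "pmul R (hsubst c (hsubst (real D) F)) x = act (1 / real D) R (hsubst c F) (x / real D)"
  unfolding pmul_def act_def hsubst_def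
  by (rule sum.cong) (use assms in \<open>auto simp: field_simps\<close>)

lemma relation:
  fixes K :: "complex set" and P :: "nat \<Rightarrow> complex poly" and F :: "real \<Rightarrow> complex"
  assumes RS: "ring_set K" and rho: "\<rho> > 0" and PK: "\<forall>i\<le>d. poly_over K (P i)" and Pd: "P d \<noteq> 0"
    and eqF: "(\<lambda>x. \<Sum>i\<le>d. pmul (P i) (hsubst (\<rho> ^ i) F) x) = (\<lambda>_. 0)"
    and i1: "i1 = (LEAST i. P i \<noteq> 0)" and c: "c > 0" "c = real s * h" "s > 0"
  shows "\<exists>A. (\<forall>i\<le>d - i1. poly_over K (A i)) \<and> A 0 \<noteq> 0 \<and> A (d - i1) \<noteq> 0 \<and>
           (\<forall>t. (\<Sum>i\<le>d - i1. act h (A i) (hsubst (c * \<rho> ^ (i1 + i)) F) t) = 0)"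
proof -
  have i1d: "i1 \<le> d" unfolding i1 using Pd by (rule Least_le)
  have Pi1: "P i1 \<noteq> 0" unfolding i1 using Pd by (rule LeastI)
  have Plow: "P i = 0" if "i < i1" for i using not_less_Least[of i "\<lambda>i. P i \<noteq> 0"] that i1 by auto
  define A where "A i = pcompose (P (i1 + i)) (monom 1 s)" for i
  define X where "X i t = act h (pcompose (P i) (monom 1 s)) (hsubst (c * \<rho> ^ i) F) t" for i t
  have key: "pmul (P i) (hsubst (\<rho> ^ i) F) (t / c) = X i t" for i t
  proof -
    have "pmul (P i) (hsubst (\<rho> ^ i) F) (t / c) = act c (P i) (hsubst (c * \<rho> ^ i) F) t"
    proof -
      have pos: "\<rho> ^ i > 0" using rho by simp
      show ?thesis unfolding pmul_def act_def hsubst_def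
        by (rule sum.cong) (use c(1) pos in \<open>auto simp: field_simps\<close>)
    qed
    also have "\<dots> = X i t" unfolding X_def c(2) by (rule act_compose)
    finally show ?thesis .
  qed
  have "(\<Sum>i\<le>d - i1. act h (A i) (hsubst (c * \<rho> ^ (i1 + i)) F) t) = 0" for t
  proof -
    have "(\<Sum>i\<le>d - i1. act h (A i) (hsubst (c * \<rho> ^ (i1 + i)) F) t) = (\<Sum>i\<le>d - i1. X (i1 + i) t)"
      unfolding A_def X_def by simp
    also have "\<dots> = (\<Sum>j\<in>(+) i1 ` {0..d - i1}. X j t)"
      by (subst sum.reindex) (auto simp: atLeast0AtMost)
    also have "(+) i1 ` {0..d - i1} = {i1..d}" using i1d by (simp add: image_add_atLeastAtMost add.commute)
    also have "(\<Sum>j\<in>{i1..d}. X j t) = (\<Sum>j\<le>d. X j t)"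
      by (rule sum.mono_neutral_left) (auto simp: X_def Plow act_zero)
    also have "\<dots> = (\<Sum>j\<le>d. pmul (P j) (hsubst (\<rho> ^ j) F) (t / c))" by (simp add: key)
    also have "\<dots> = 0" using fun_cong[OF eqF, of "t / c"] by simp
    finally show ?thesis .
  qed
  moreover have "\<forall>i\<le>d - i1. poly_over K (A i)" unfolding A_def using PK i1d
    by (auto intro!: po_compose RS)
  moreover have "A 0 \<noteq> 0" "A (d - i1) \<noteq> 0" unfolding A_def using Pi1 Pd i1d c(3)
    by (simp_all add: compose_nz)
  ultimately show ?thesis by blast
qed



lemma powr_shift:
  assumes "(\<rho>::real) > 0"
  shows "\<rho> powr real_of_int (a - int i1) * \<rho> ^ (i1 + i) = \<rho> powr real_of_int (a + int i)"
proof -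
  have "\<rho> ^ (i1 + i) = \<rho> powr real (i1 + i)" by (rule powr_realpow[OF assms, symmetric])
  then have "\<rho> powr real_of_int (a - int i1) * \<rho> ^ (i1 + i) = \<rho> powr (real_of_int (a - int i1) + real (i1 + i))"
    by (simp only: powr_add)
  also have "real_of_int (a - int i1) + real (i1 + i) = real_of_int (a + int i)" by simp
  finally show ?thesis .
qed

theorem mainTheorem12:
  fixes K :: "complex set" and \<alpha> \<beta> :: real and F :: "real \<Rightarrow> complex"
    and d1 d2 :: nat and P Q :: "nat \<Rightarrow> complex poly" and N :: int
  assumes "number_field K"
    and "\<alpha> \<in> \<rat>" "\<beta> \<in> \<rat>" "\<alpha> > 0" "\<beta> > 0" "mult_indep \<alpha> \<beta>"
    and "hahn_series K F"
    and "\<forall>i\<le>d1. poly_over K (P i)" "P d1 \<noteq> 0"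
    and "(\<lambda>x. \<Sum>i\<le>d1. pmul (P i) (hsubst (\<alpha> ^ i) F) x) = (\<lambda>_. 0)"
    and "\<forall>i\<le>d2. poly_over K (Q i)" "Q d2 \<noteq> 0"
    and "(\<lambda>x. \<Sum>i\<le>d2. pmul (Q i) (hsubst (\<beta> ^ i) F) x) = (\<lambda>_. 0)"
    and "N > 0"
  shows "\<exists>l::nat. l > 0 \<and> (\<forall>m n :: int. \<bar>m\<bar> < N \<and> \<bar>n\<bar> < N \<longrightarrow>
           mahler K (\<alpha> powr (real_of_int n) * \<beta> powr (real_of_int m)) (hsubst (real l) F))"
proof -
  have RS: "ring_set K" using assms(1) by (rule nf_ring)
  obtain p1 q1 where pq1: "p1 > 0" "q1 > 0" "\<alpha> = real p1 / real q1" using pos_rat assms(2,4) by blast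
  obtain p2 q2 where pq2: "p2 > 0" "q2 > 0" "\<beta> = real p2 / real q2" using pos_rat assms(3,5) by blast
  define i1 where "i1 = (LEAST i. P i \<noteq> 0)"
  define j1 where "j1 = (LEAST i. Q i \<noteq> 0)"
  have i1d: "i1 \<le> d1" unfolding i1_def using assms(9) by (rule Least_le)
  have j1d: "j1 \<le> d2" unfolding j1_def using assms(12) by (rule Least_le)
  define L1 where "L1 = d1 - i1"
  define L2 where "L2 = d2 - j1"
  define g where "g a b = hsubst (\<alpha> powr real_of_int a * \<beta> powr real_of_int b) F" for a b :: int
  define Bs where "Bs = (\<lambda>(a,b). g (int a) (int b)) ` ({..<L1} \<times> {..<L2})"
  define e where "e = card Bs"
  define T where "T = N * int e"
  define M where "M = nat T + d1 + d2"
  define D where "D = (p1*q1)^M * (p2*q2)^M"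
  define h where "h = 1 / real D"
  have finB: "finite Bs" unfolding Bs_def by auto
  have T0: "T \<ge> 0" unfolding T_def using assms(14) by simp
  have Dpos: "D > 0" unfolding D_def using pq1 pq2 by simp
  have intM: "int M = T + int d1 + int d2" using T0 unfolding M_def by simp
  have box: "\<exists>s::nat. s > 0 \<and> \<alpha> powr real_of_int a * \<beta> powr real_of_int b = real s * h"
    if ab: "\<bar>a\<bar> \<le> int M" "\<bar>b\<bar> \<le> int M" for a b
  proof -
    obtain s1 where s1: "s1 > 0" "real s1 = real ((p1*q1)^M) * \<alpha> powr real_of_int a"
      using single_box[OF pq1(1,2) ab(1)] pq1(3) by auto
    obtain s2 where s2: "s2 > 0" "real s2 = real ((p2*q2)^M) * \<beta> powr real_of_int b"
      using single_box[OF pq2(1,2) ab(2)] pq2(3) by auto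
    have "real (s1 * s2) = real D * (\<alpha> powr real_of_int a * \<beta> powr real_of_int b)"
      unfolding D_def using s1 s2 by (simp add: algebra_simps)
    then show ?thesis using s1 s2 Dpos unfolding h_def
      by (intro exI[of _ "s1 * s2"]) (auto simp: field_simps)
  qed
  have relA: "\<exists>A. (\<forall>i\<le>L1. poly_over K (A i)) \<and> A 0 \<noteq> 0 \<and> A L1 \<noteq> 0 \<and>
      (\<forall>t. (\<Sum>i\<le>L1. act h (A i) (g (a + int i) b) t) = 0)"
    if ab: "\<bar>a\<bar> \<le> T" "\<bar>b\<bar> \<le> T + int d2" for a b
  proof -
    define c where "c = \<alpha> powr real_of_int (a - int i1) * \<beta> powr real_of_int b"
    have hb: "\<bar>a - int i1\<bar> \<le> int M" "\<bar>b\<bar> \<le> int M" using ab i1d T0 intM by linarith+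
    obtain s where s: "s > 0" "c = real s * h" using box[OF hb] unfolding c_def by blast
    have cpos: "c > 0" unfolding c_def using assms(4,5) by simp
    obtain A where A: "(\<forall>i\<le>L1. poly_over K (A i))" "A 0 \<noteq> 0" "A L1 \<noteq> 0"
      "(\<forall>t. (\<Sum>i\<le>L1. act h (A i) (hsubst (c * \<alpha> ^ (i1 + i)) F) t) = 0)"
      using relation[OF RS assms(4) assms(8) assms(9) assms(10) i1_def cpos s(2) s(1)]
      unfolding L1_def by blast
    have "c * \<alpha> ^ (i1 + i) = \<alpha> powr real_of_int (a + int i) * \<beta> powr real_of_int b" for i
      unfolding c_def using powr_shift[OF assms(4), of a i1 i] by (simp add: algebra_simps)
    then have "hsubst (c * \<alpha> ^ (i1 + i)) F = g (a + int i) b" for i unfolding g_def by simp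
    then show ?thesis using A by auto
  qed
  have relB: "\<exists>A. (\<forall>i\<le>L2. poly_over K (A i)) \<and> A 0 \<noteq> 0 \<and> A L2 \<noteq> 0 \<and>
      (\<forall>t. (\<Sum>i\<le>L2. act h (A i) (g a (b + int i)) t) = 0)"
    if ab: "\<bar>a\<bar> \<le> T" "\<bar>b\<bar> \<le> T" for a b
  proof -
    define c where "c = \<alpha> powr real_of_int a * \<beta> powr real_of_int (b - int j1)"
    have hb: "\<bar>a\<bar> \<le> int M" "\<bar>b - int j1\<bar> \<le> int M" using ab j1d T0 intM by linarith+
    obtain s where s: "s > 0" "c = real s * h" using box[OF hb] unfolding c_def by blast
    have cpos: "c > 0" unfolding c_def using assms(4,5) by simp
    obtain A where A: "(\<forall>i\<le>L2. poly_over K (A i))" "A 0 \<noteq> 0" "A L2 \<noteq> 0"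
      "(\<forall>t. (\<Sum>i\<le>L2. act h (A i) (hsubst (c * \<beta> ^ (j1 + i)) F) t) = 0)"
      using relation[OF RS assms(5) assms(11) assms(12) assms(13) j1_def cpos s(2) s(1)]
      unfolding L2_def by blast
    have "c * \<beta> ^ (j1 + i) = \<alpha> powr real_of_int a * \<beta> powr real_of_int (b + int i)" for i
      unfolding c_def using powr_shift[OF assms(5), of b j1 i] by (simp add: algebra_simps)
    then have "hsubst (c * \<beta> ^ (j1 + i)) F = g a (b + int i)" for i unfolding g_def by simp
    then show ?thesis using A by auto
  qed
  have phase1: "\<forall>a. -T \<le> a \<and> a \<le> T \<longrightarrow> rep K h Bs (g a b)" if "0 \<le> b" "b < int L2" for b
  proof (rule one_dim[OF RS, where T=T and L=L1 and hh="\<lambda>a. g a b" and h=h and Bs=Bs])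
    show "\<forall>a. - T \<le> a \<and> a \<le> T \<longrightarrow> (\<exists>A. (\<forall>i\<le>L1. poly_over K (A i)) \<and> A 0 \<noteq> 0 \<and> A L1 \<noteq> 0 \<and>
          (\<forall>t. (\<Sum>i\<le>L1. act h (A i) (g (a + int i) b) t) = 0))"
      using relA that T0 unfolding L2_def by auto
    show "\<forall>a. 0 \<le> a \<and> a < int L1 \<longrightarrow> rep K h Bs (g a b)"
    proof (intro allI impI)
      fix a assume a: "0 \<le> a \<and> a < int L1"
      have "g a b = (\<lambda>(a,b). g (int a) (int b)) (nat a, nat b)" using a that by simp
      moreover have "(nat a, nat b) \<in> {..<L1} \<times> {..<L2}" using a that by auto
      ultimately have "g a b \<in> Bs" unfolding Bs_def by blast
      then show "rep K h Bs (g a b)" by (rule rep_basis[OF RS finB])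
    qed
  qed
  have allrep: "rep K h Bs (g a b)" if "\<bar>a\<bar> \<le> T" "\<bar>b\<bar> \<le> T" for a b
  proof -
    have "\<forall>b. -T \<le> b \<and> b \<le> T \<longrightarrow> rep K h Bs (g a b)"
    proof (rule one_dim[OF RS, where T=T and L=L2 and hh="\<lambda>b. g a b" and h=h and Bs=Bs])
      show "\<forall>b. - T \<le> b \<and> b \<le> T \<longrightarrow> (\<exists>A. (\<forall>i\<le>L2. poly_over K (A i)) \<and> A 0 \<noteq> 0 \<and> A L2 \<noteq> 0 \<and>
          (\<forall>t. (\<Sum>i\<le>L2. act h (A i) (g a (b + int i)) t) = 0))"
        using relB that by auto
      show "\<forall>b. 0 \<le> b \<and> b < int L2 \<longrightarrow> rep K h Bs (g a b)"
      proof (intro allI impI)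
        fix b' assume b': "0 \<le> b' \<and> b' < int L2"
        have "- T \<le> a \<and> a \<le> T" using that(1) by (simp add: abs_le_iff)
        then show "rep K h Bs (g a b')" using phase1[of b'] b' by blast
      qed
    qed
    then show ?thesis using that by (simp add: abs_le_iff)
  qed
  show ?thesis
  proof (intro exI[of _ D] conjI allI impI)
    show "D > 0" by (rule Dpos)
    fix m n :: int assume mn: "\<bar>m\<bar> < N \<and> \<bar>n\<bar> < N"
    define gam where "gam = \<alpha> powr real_of_int n * \<beta> powr real_of_int m"
    define gj where "gj j = g (n * int j) (m * int j)" for j :: nat
    have bnd: "\<bar>z * int j\<bar> \<le> T" if "\<bar>z\<bar> < N" "j \<le> e" for z j
    proof -
      have "\<bar>z * int j\<bar> = \<bar>z\<bar> * int j" by (simp add: abs_mult)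
      also have "\<dots> \<le> N * int e" using that by (intro mult_mono) auto
      finally show ?thesis unfolding T_def .
    qed
    have reps: "\<forall>j\<in>{..e}. rep K h Bs (gj j)"
    proof
      fix j assume "j \<in> {..e}"
      then have "j \<le> e" by simp
      then have "\<bar>n * int j\<bar> \<le> T" "\<bar>m * int j\<bar> \<le> T" using bnd mn by blast+
      then show "rep K h Bs (gj j)" unfolding gj_def by (rule allrep)
    qed
    obtain Dl where Dl: "poly_over K Dl" "Dl \<noteq> 0" "\<forall>j\<in>{..e}. rep' K h Bs (act h Dl (gj j))"
      using common_denom[OF RS _ reps] by auto
    have "\<forall>j\<in>{..e}. \<exists>cj. (\<forall>f\<in>Bs. poly_over K (cj f)) \<and> (\<forall>t. act h Dl (gj j) t = (\<Sum>f\<in>Bs. act h (cj f) f t))"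
      using Dl(3) unfolding rep'_def by blast
    from bchoice[OF this] obtain c where c: "\<forall>j\<in>{..e}. (\<forall>f\<in>Bs. poly_over K (c j f)) \<and>
        (\<forall>t. act h Dl (gj j) t = (\<Sum>f\<in>Bs. act h (c j f) f t))"
      by blast
    have Sc: "(0::complex poly) \<in> {p. poly_over K p}" "1 \<in> {p. poly_over K p}"
      "\<forall>a\<in>{p. poly_over K p}. \<forall>b\<in>{p. poly_over K p}. a + b \<in> {p. poly_over K p} \<and>
         a * b \<in> {p. poly_over K p} \<and> - a \<in> {p. poly_over K p}"
      using RS by (auto simp: po_0 po_1 po_add po_mult po_uminus)
    obtain s where s: "\<forall>j\<in>{..e}. s j \<in> {p. poly_over K p}" "\<exists>j\<in>{..e}. s j \<noteq> 0"
      "\<forall>f\<in>Bs. (\<Sum>j\<in>{..e}. s j * c j f) = 0"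
      using kernel[OF Sc finB, of "{..e}" c] c unfolding e_def by auto
    have gj_eq: "hsubst (gam ^ j) F = gj j" for j
    proof -
      have "gam ^ j = (\<alpha> powr real_of_int n) ^ j * (\<beta> powr real_of_int m) ^ j"
        unfolding gam_def by (simp add: power_mult_distrib)
      also have "(\<alpha> powr real_of_int n) ^ j = \<alpha> powr real_of_int (n * int j)"
        using assms(4) by (simp add: powr_realpow[symmetric] powr_powr)
      also have "(\<beta> powr real_of_int m) ^ j = \<beta> powr real_of_int (m * int j)"
        using assms(5) by (simp add: powr_realpow[symmetric] powr_powr)
      finally show ?thesis unfolding gj_def g_def by simp
    qed
    have gampos: "gam ^ j > 0" for j unfolding gam_def using assms(4,5) by simp
    show "mahler K (\<alpha> powr real_of_int n * \<beta> powr real_of_int m) (hsubst (real D) F)"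
      unfolding gam_def[symmetric] mahler_def
    proof (rule exI[of _ e], rule exI[of _ "\<lambda>j. s j * Dl"], intro conjI)
      show "\<forall>j\<le>e. poly_over K (s j * Dl)" using s(1) Dl(1) by (auto intro: po_mult RS)
      show "\<exists>j\<le>e. s j * Dl \<noteq> 0" using s(2) Dl(2) by auto
      show "(\<lambda>i. \<Sum>j\<le>e. pmul (s j * Dl) (hsubst (gam ^ j) (hsubst (real D) F)) i) = (\<lambda>_. 0)"
      proof
        fix x
        define t where "t = x / real D"
        have "(\<Sum>j\<le>e. pmul (s j * Dl) (hsubst (gam ^ j) (hsubst (real D) F)) x)
              = (\<Sum>j\<le>e. act h (s j * Dl) (gj j) t)"
          unfolding t_def h_def using pmul_act[OF gampos Dpos] gj_eq by simp
        also have "\<dots> = (\<Sum>j\<le>e. act h (s j) (\<lambda>t. \<Sum>f\<in>Bs. act h (c j f) f t) t)"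
        proof (rule sum.cong)
          fix j assume "j \<in> {..e}"
          then show "act h (s j * Dl) (gj j) t = act h (s j) (\<lambda>t. \<Sum>f\<in>Bs. act h (c j f) f t) t"
            unfolding act_mult using c by (intro act_fun_cong[OF RS]) auto
        qed simp
        also have "\<dots> = (\<Sum>j\<le>e. \<Sum>f\<in>Bs. act h (s j * c j f) f t)"
          by (simp add: act_sum_f act_mult)
        also have "\<dots> = (\<Sum>f\<in>Bs. \<Sum>j\<le>e. act h (s j * c j f) f t)" by (rule sum.swap)
        also have "\<dots> = (\<Sum>f\<in>Bs. act h (\<Sum>j\<le>e. s j * c j f) f t)" by (simp add: act_sum_p)
        also have "\<dots> = 0" using s(3) by (simp add: act_zero)
        finally show "(\<Sum>j\<le>e. pmul (s j * Dl) (hsubst (gam ^ j) (hsubst (real D) F)) x) = 0" .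
      qed
    qed
  qed
qed

end
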